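(* Let $v:\mathbb{R}\to(0,\infty)$ be decreasing on $(-\infty,0]$ and increasing on $[0,\infty)$, with $v(0)\ge1$. Then $v$ is admissible if and only if \[\sup_{t\in\mathbb{R}}\frac{v(2t)}{v(t)}<\infty.\]
   Context: A measurable function $v:\mathbb{R}\to(0,\infty)$ is called admissible if $v(s)\ge1$ for all $s\in\mathbb{R}$ and $\sup_{s,t\in\mathbb{R}}\frac{v(s+t)}{v(s)+v(t)}<\infty$. *)

theory Defs
  imports "HOL-Analysis.Analysis"
begin

definition admissible :: "(real \<Rightarrow> real) \<Rightarrow> bool" where
  "admissible v \<longleftrightarrow> v \<in> borel_measurable borel \<and> (\<forall>s. v s > 0) \<and> (\<forall>s. v s \<ge> 1) \<and>
     bdd_above {v (s + t) / (v s + v t) | s t. True}"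

end

theory Submission
  imports Defs
begin

theorem lemma2p2:
  fixes v :: "real \<Rightarrow> real"
  assumes pos: "\<And>s. v s > 0"
    and dec: "antimono_on {..0} v"
    and inc: "mono_on {0..} v"
    and v0: "v 0 \<ge> 1"
  shows "admissible v \<longleftrightarrow> bdd_above {v (2 * t) / v t | t. True}"
proof -
  have D: "v y \<le> v x" if "x \<le> y" "y \<le> 0" for x y
    using dec that unfolding monotone_on_def by auto
  have I: "v x \<le> v y" if "0 \<le> x" "x \<le> y" for x y
    using inc that unfolding monotone_on_def by auto
  have ge1: "v s \<ge> 1" for s
  proof (cases "s \<le> 0")
    case True then show ?thesis using D[of s 0] v0 by auto
  next
    case False then show ?thesis using I[of 0 s] v0 by auto
  qed
  have meas: "v \<in> borel_measurable borel"
  proof -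
    have m1: "mono (\<lambda>x. - v (min x 0))"
      unfolding mono_def using D by (simp add: min_def)
    have m2: "mono (\<lambda>x. v (max x 0))"
      unfolding mono_def using I by (simp add: max_def)
    have f1: "(\<lambda>x. - v (min x 0)) \<in> borel_measurable borel"
      using borel_measurable_mono[OF m1] .
    have f2: "(\<lambda>x. v (max x 0)) \<in> borel_measurable borel"
      using borel_measurable_mono[OF m2] .
    have eq: "v = (\<lambda>x. v (max x 0) - (- v (min x 0)) - v 0)"
      by (rule ext) (auto simp: min_def max_def)
    show ?thesis by (subst eq) (intro borel_measurable_diff f1 f2 borel_measurable_const)
  qed
  show ?thesis
  proof
    assume "admissible v"
    then obtain C where C: "\<And>s t. v (s + t) / (v s + v t) \<le> C"
      unfolding admissible_def bdd_above_def by blast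
    show "bdd_above {v (2 * t) / v t | t. True}"
      unfolding bdd_above_def
    proof (intro exI[of _ "2*C"] ballI)
      fix x assume "x \<in> {v (2 * t) / v t | t. True}"
      then obtain t where x: "x = v (2*t) / v t" by blast
      have "v (t + t) / (v t + v t) \<le> C" by (rule C)
      moreover have "t + t = 2*t" "v t + v t = 2 * v t" by simp_all
      ultimately have "v (2*t) / (2 * v t) \<le> C" by metis
      then have "x * v t \<le> (2*C) * v t" using pos[of t] x by (simp add: field_simps)
      then show "x \<le> 2*C" using pos[of t] by (meson mult_right_le_imp_le)
    qed
  next
    assume "bdd_above {v (2 * t) / v t | t. True}"
    then obtain K where K0: "\<And>t. v (2*t) / v t \<le> K"
      unfolding bdd_above_def by blast
    have K: "v (2*t) \<le> K * v t" for t
      using K0[of t] pos[of t] by (simp add: field_simps)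
    have key: "v x \<le> K * v u" if "\<bar>x\<bar> \<le> 2*\<bar>u\<bar>" "x * u \<ge> 0" for x u
    proof (cases "u \<ge> 0")
      case True
      then have "x \<ge> 0 \<or> u = 0" using that(2)
        by (auto simp: zero_le_mult_iff)
      then have "0 \<le> x \<and> x \<le> 2*u" using that True by auto
      then show ?thesis using I[of x "2*u"] K[of u] by auto
    next
      case False
      then have "x \<le> 0" using that(2)
        by (auto simp: zero_le_mult_iff)
      then have "2*u \<le> x" using that False by auto
      then show ?thesis using D[of "2*u" x] \<open>x \<le> 0\<close> K[of u] by auto
    qed
    have "v (s + t) / (v s + v t) \<le> K" for s t
    proof -
      have vs: "v s > 0" "v t > 0" using pos by auto
      have Kn: "K \<ge> 0"
        proof -
        have "0 < K * v 0" using K[of 0] pos[of 0] by simp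
        then show ?thesis using pos[of 0] by (simp add: zero_less_mult_iff)
      qed
      have "v (s + t) \<le> K * v s \<or> v (s + t) \<le> K * v t"
      proof (cases "\<bar>t\<bar> \<le> \<bar>s\<bar>")
        case True
        have "(s+t) * s \<ge> 0"
          using True by (auto simp: zero_le_mult_iff)
        then show ?thesis using key[of "s+t" s] True by auto
      next
        case False
        have "(s+t) * t \<ge> 0"
          using False by (auto simp: zero_le_mult_iff)
        then show ?thesis using key[of "s+t" t] False by auto
      qed
      then have "v (s+t) \<le> K * (v s + v t)"
        proof -
        have "K * v s \<ge> 0" "K * v t \<ge> 0" using vs Kn by auto
        then show ?thesis using \<open>v (s + t) \<le> K * v s \<or> v (s + t) \<le> K * v t\<close>
          by (auto simp: distrib_left)
      qed
      then show ?thesis using vs by (simp add: field_simps)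
    qed
    then show "admissible v"
      unfolding admissible_def bdd_above_def using meas pos ge1 by blast
  qed
qed

end
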